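(* Let $G=(V,E)$ be an undirected graph with edge capacities $u_e\in\mathbb{Z}_{\ge0}$ for all $e\in E$, sources $s_1,s_2$, sinks $t_1,t_2$, and let $k_1,k_2\in\mathbb{Z}_{\ge0}$. Let $d_1,d_2>0$ be demands with $d_1/d_2=k_1/k_2$. Then a maximal totally uniform $(k_1,k_2)$-splittable flow provides a $\tfrac12$-approximation of a maximal concurrent $(k_1,k_2)$-splittable flow for these demands: its concurrent objective value $\min_{i\in\{1,2\}}\tfrac{1}{d_i}\sum_{j=1}^{k_i}f^i_j$ is at least half the maximum of this objective over all $(k_1,k_2)$-splittable flows.
   Context: A $(k_1,k_2)$-splittable flow consists of $k_1$ $s_1$--$t_1$-paths carrying flow values $f^1_1,\dots,f^1_{k_1}\ge0$ and $k_2$ $s_2$--$t_2$-paths carrying flow values $f^2_1,\dots,f^2_{k_2}\ge0$, such that for every edge $e$ the total flow of all paths (counted with multiplicity, both commodities) containing $e$ is at most $u_e$; paths may repeat and values may be $0$ (no uniformity required). It is totally uniform if all $k_1+k_2$ paths carry the same value $x$; a maximal totally uniform flow is one maximizing $x$. A maximal concurrent $(k_1,k_2)$-splittable flow for demands $d_1,d_2$ is a $(k_1,k_2)$-splittable flow maximizing $\min_{i\in\{1,2\}}\frac{1}{d_i}\sum_{j=1}^{k_i}f^i_j$. *)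

theory Defs
  imports Main "HOL-Library.Multiset" Complex_Main
begin

definition undirected_graph :: "'v set \<Rightarrow> 'v set set \<Rightarrow> bool" where
  "undirected_graph V E \<longleftrightarrow> finite V \<and>
     (\<forall>e\<in>E. \<exists>a b. a \<noteq> b \<and> a \<in> V \<and> b \<in> V \<and> e = {a, b})"

definition is_path :: "'v set set \<Rightarrow> 'v \<Rightarrow> 'v \<Rightarrow> 'v list \<Rightarrow> bool" where
  "is_path E s t p \<longleftrightarrow> p \<noteq> [] \<and> hd p = s \<and> last p = t \<and> distinct p \<and>
     (\<forall>i. Suc i < length p \<longrightarrow> {p ! i, p ! Suc i} \<in> E)"

definition path_edges :: "'v list \<Rightarrow> 'v set set" where
  "path_edges p = {{p ! i, p ! Suc i} | i. Suc i < length p}"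

definition edge_load :: "nat \<Rightarrow> nat \<Rightarrow> (nat \<Rightarrow> 'v list) \<Rightarrow> (nat \<Rightarrow> real)
    \<Rightarrow> (nat \<Rightarrow> 'v list) \<Rightarrow> (nat \<Rightarrow> real) \<Rightarrow> 'v set \<Rightarrow> real" where
  "edge_load k1 k2 P1 f1 P2 f2 e =
     (\<Sum>j<k1. if e \<in> path_edges (P1 j) then f1 j else 0) +
     (\<Sum>j<k2. if e \<in> path_edges (P2 j) then f2 j else 0)"

definition splittable_flow ::
  "'v set set \<Rightarrow> ('v set \<Rightarrow> nat) \<Rightarrow> 'v \<Rightarrow> 'v \<Rightarrow> 'v \<Rightarrow> 'v \<Rightarrow> nat \<Rightarrow> nat
    \<Rightarrow> (nat \<Rightarrow> 'v list) \<Rightarrow> (nat \<Rightarrow> real) \<Rightarrow> (nat \<Rightarrow> 'v list) \<Rightarrow> (nat \<Rightarrow> real) \<Rightarrow> bool" where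
  "splittable_flow E u s1 t1 s2 t2 k1 k2 P1 f1 P2 f2 \<longleftrightarrow>
     (\<forall>j<k1. is_path E s1 t1 (P1 j) \<and> f1 j \<ge> 0) \<and>
     (\<forall>j<k2. is_path E s2 t2 (P2 j) \<and> f2 j \<ge> 0) \<and>
     (\<forall>e\<in>E. edge_load k1 k2 P1 f1 P2 f2 e \<le> real (u e))"

definition totally_uniform_flow ::
  "'v set set \<Rightarrow> ('v set \<Rightarrow> nat) \<Rightarrow> 'v \<Rightarrow> 'v \<Rightarrow> 'v \<Rightarrow> 'v \<Rightarrow> nat \<Rightarrow> nat
    \<Rightarrow> (nat \<Rightarrow> 'v list) \<Rightarrow> (nat \<Rightarrow> real) \<Rightarrow> (nat \<Rightarrow> 'v list) \<Rightarrow> (nat \<Rightarrow> real) \<Rightarrow> real \<Rightarrow> bool" where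
  "totally_uniform_flow E u s1 t1 s2 t2 k1 k2 P1 f1 P2 f2 x \<longleftrightarrow>
     splittable_flow E u s1 t1 s2 t2 k1 k2 P1 f1 P2 f2 \<and>
     (\<forall>j<k1. f1 j = x) \<and> (\<forall>j<k2. f2 j = x)"

definition max_totally_uniform_flow ::
  "'v set set \<Rightarrow> ('v set \<Rightarrow> nat) \<Rightarrow> 'v \<Rightarrow> 'v \<Rightarrow> 'v \<Rightarrow> 'v \<Rightarrow> nat \<Rightarrow> nat
    \<Rightarrow> (nat \<Rightarrow> 'v list) \<Rightarrow> (nat \<Rightarrow> real) \<Rightarrow> (nat \<Rightarrow> 'v list) \<Rightarrow> (nat \<Rightarrow> real) \<Rightarrow> real \<Rightarrow> bool" where
  "max_totally_uniform_flow E u s1 t1 s2 t2 k1 k2 P1 f1 P2 f2 x \<longleftrightarrow>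
     totally_uniform_flow E u s1 t1 s2 t2 k1 k2 P1 f1 P2 f2 x \<and>
     (\<forall>Q1 g1 Q2 g2 y. totally_uniform_flow E u s1 t1 s2 t2 k1 k2 Q1 g1 Q2 g2 y \<longrightarrow> y \<le> x)"

definition concurrent_value ::
  "real \<Rightarrow> real \<Rightarrow> nat \<Rightarrow> nat \<Rightarrow> (nat \<Rightarrow> real) \<Rightarrow> (nat \<Rightarrow> real) \<Rightarrow> real" where
  "concurrent_value d1 d2 k1 k2 f1 f2 = min ((\<Sum>j<k1. f1 j) / d1) ((\<Sum>j<k2. f2 j) / d2)"

end

theory Submission
  imports Defs
begin

lemma assign_lemma:
  fixes c :: "nat \<Rightarrow> nat"
  shows "n \<le> (\<Sum>j<k. c j) \<Longrightarrow> \<exists>\<sigma>. (\<forall>i<n. \<sigma> i < k) \<and>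
     (\<forall>h::nat\<Rightarrow>real. (\<forall>j. h j \<ge> 0) \<longrightarrow> (\<Sum>i<n. h (\<sigma> i)) \<le> (\<Sum>j<k. real (c j) * h j))"
proof (induction n arbitrary: c)
  case 0
  show ?case by (rule exI[of _ "\<lambda>_. 0"]) (auto intro!: sum_nonneg)
next
  case (Suc n)
  have "\<exists>j0<k. c j0 \<ge> 1"
  proof (rule ccontr)
    assume "\<not> ?thesis"
    then have "(\<Sum>j<k. c j) = 0" by (intro sum.neutral) auto
    with Suc.prems show False by simp
  qed
  then obtain j0 where j0: "j0 < k" "c j0 \<ge> 1" by blast
  define c' where "c' = c(j0 := c j0 - 1)"
  have fin: "finite {..<k}" by simp
  have s1: "(\<Sum>j<k. c j) = c j0 + (\<Sum>j\<in>{..<k}-{j0}. c j)"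
    using j0 by (simp add: sum.remove)
  have s2: "(\<Sum>j<k. c' j) = c' j0 + (\<Sum>j\<in>{..<k}-{j0}. c' j)"
    using j0 by (simp add: sum.remove)
  have s3: "(\<Sum>j\<in>{..<k}-{j0}. c' j) = (\<Sum>j\<in>{..<k}-{j0}. c j)"
    by (rule sum.cong) (auto simp: c'_def)
  have "n \<le> (\<Sum>j<k. c' j)" using Suc.prems s1 s2 s3 j0 by (simp add: c'_def)
  from Suc.IH[OF this] obtain \<sigma> where
    \<sigma>: "\<forall>i<n. \<sigma> i < k"
      "\<forall>h::nat\<Rightarrow>real. (\<forall>j. h j \<ge> 0) \<longrightarrow> (\<Sum>i<n. h (\<sigma> i)) \<le> (\<Sum>j<k. real (c' j) * h j)"
    by blast
  define \<sigma>' where "\<sigma>' = \<sigma>(n := j0)"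
  show ?case
  proof (rule exI[of _ \<sigma>'], intro conjI allI impI)
    fix i assume "i < Suc n" then show "\<sigma>' i < k" using \<sigma>(1) j0 by (auto simp: \<sigma>'_def less_Suc_eq)
  next
    fix h :: "nat \<Rightarrow> real" assume h: "\<forall>j. h j \<ge> 0"
    have a: "(\<Sum>i<Suc n. h (\<sigma>' i)) = (\<Sum>i<n. h (\<sigma> i)) + h j0"
      by (simp add: \<sigma>'_def)
    have b1: "(\<Sum>j<k. real (c j) * h j) = real (c j0) * h j0 + (\<Sum>j\<in>{..<k}-{j0}. real (c j) * h j)"
      using j0 by (simp add: sum.remove)
    have b2: "(\<Sum>j<k. real (c' j) * h j) = real (c' j0) * h j0 + (\<Sum>j\<in>{..<k}-{j0}. real (c' j) * h j)"
      using j0 by (simp add: sum.remove)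
    have b3: "(\<Sum>j\<in>{..<k}-{j0}. real (c' j) * h j) = (\<Sum>j\<in>{..<k}-{j0}. real (c j) * h j)"
      by (rule sum.cong) (auto simp: c'_def)
    have b4: "real (c' j0) = real (c j0) - 1" using j0 by (simp add: c'_def of_nat_diff)
    have "(\<Sum>i<n. h (\<sigma> i)) \<le> (\<Sum>j<k. real (c' j) * h j)" using \<sigma>(2) h by blast
    then show "(\<Sum>i<Suc n. h (\<sigma>' i)) \<le> (\<Sum>j<k. real (c j) * h j)"
      using a b1 b2 b3 b4 by (simp add: algebra_simps)
  qed
qed


lemma build_commodity:
  fixes Q :: "nat \<Rightarrow> 'v list" and g :: "nat \<Rightarrow> real" and y :: real
  assumes y: "y > 0" and g0: "\<forall>j<k. g j \<ge> 0" and S: "(\<Sum>j<k. g j) \<ge> 2 * real k * y"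
  shows "\<exists>\<sigma>. (\<forall>i<k. \<sigma> i < k) \<and>
    (\<forall>e. (\<Sum>i<k. if e \<in> path_edges (Q (\<sigma> i)) then y else 0)
          \<le> (\<Sum>j<k. if e \<in> path_edges (Q j) then g j else 0))"
proof -
  define c where "c j = nat \<lfloor>g j / y\<rfloor>" for j
  have cle: "real (c j) * y \<le> g j" if "j < k" for j
  proof -
    have "real (c j) = of_int \<lfloor>g j / y\<rfloor>" using g0 that y by (simp add: c_def)
    also have "\<dots> \<le> g j / y" by simp
    finally show ?thesis using y by (simp add: pos_le_divide_eq)
  qed
  have cge: "real (c j) \<ge> g j / y - 1" if "j < k" for j
  proof -
    have "real (c j) = of_int \<lfloor>g j / y\<rfloor>" using g0 that y by (simp add: c_def)
    then show ?thesis by linarith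
  qed
  have "real (\<Sum>j<k. c j) = (\<Sum>j<k. real (c j))" by simp
  also have "\<dots> \<ge> (\<Sum>j<k. g j / y - 1)" by (rule sum_mono) (simp add: cge)
  finally have "real (\<Sum>j<k. c j) \<ge> (\<Sum>j<k. g j) / y - real k"
    by (simp add: sum_subtractf sum_divide_distrib)
  moreover have "(\<Sum>j<k. g j) / y \<ge> 2 * real k" using S y by (simp add: pos_le_divide_eq)
  ultimately have "k \<le> (\<Sum>j<k. c j)" by linarith
  from assign_lemma[OF this] obtain \<sigma> where
    \<sigma>: "\<forall>i<k. \<sigma> i < k"
      "\<forall>h::nat\<Rightarrow>real. (\<forall>j. h j \<ge> 0) \<longrightarrow> (\<Sum>i<k. h (\<sigma> i)) \<le> (\<Sum>j<k. real (c j) * h j)"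
    by blast
  show ?thesis
  proof (rule exI[of _ \<sigma>], intro conjI allI)
    show "i < k \<longrightarrow> \<sigma> i < k" for i using \<sigma>(1) by blast
  next
    fix e
    let ?h = "\<lambda>j. if e \<in> path_edges (Q j) then y else 0"
    have hp: "\<forall>j. ?h j \<ge> 0" using y by simp
    have "(\<Sum>i<k. ?h (\<sigma> i)) \<le> (\<Sum>j<k. real (c j) * ?h j)" using spec[OF \<sigma>(2), of ?h] hp by blast
    also have "\<dots> \<le> (\<Sum>j<k. if e \<in> path_edges (Q j) then g j else 0)"
      by (rule sum_mono) (use cle in auto)
    finally show "(\<Sum>i<k. ?h (\<sigma> i)) \<le> (\<Sum>j<k. if e \<in> path_edges (Q j) then g j else 0)" .
  qed
qed

theorem mainTheorem8:
  fixes V :: "'v set" and E :: "'v set set" and u :: "'v set \<Rightarrow> nat"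
    and s1 t1 s2 t2 :: 'v and k1 k2 :: nat and d1 d2 :: real
    and P1 P2 :: "nat \<Rightarrow> 'v list" and f1 f2 :: "nat \<Rightarrow> real" and x :: real
  assumes "undirected_graph V E"
    and "s1 \<in> V" "t1 \<in> V" "s2 \<in> V" "t2 \<in> V"
    and "d1 > 0" "d2 > 0" "d1 / d2 = real k1 / real k2"
    and "max_totally_uniform_flow E u s1 t1 s2 t2 k1 k2 P1 f1 P2 f2 x"
  shows "\<forall>Q1 g1 Q2 g2. splittable_flow E u s1 t1 s2 t2 k1 k2 Q1 g1 Q2 g2 \<longrightarrow>
           concurrent_value d1 d2 k1 k2 f1 f2 \<ge> concurrent_value d1 d2 k1 k2 g1 g2 / 2"
proof (intro allI impI)
  fix Q1 g1 Q2 g2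
  assume sf: "splittable_flow E u s1 t1 s2 t2 k1 k2 Q1 g1 Q2 g2"
  note d = assms(6,7,8)
  have "d1 / d2 > 0" using d(1,2) by simp
  then have "real k1 / real k2 > 0" using d(3) by metis
  then have k1: "k1 > 0" and k2: "k2 > 0" by (auto simp: zero_less_divide_iff)
  have eqr: "real k1 / d1 = real k2 / d2" using d k1 k2 by (simp add: field_simps)
  have mt: "totally_uniform_flow E u s1 t1 s2 t2 k1 k2 P1 f1 P2 f2 x"
    and mx: "\<And>Q1 g1 Q2 g2 y. totally_uniform_flow E u s1 t1 s2 t2 k1 k2 Q1 g1 Q2 g2 y \<Longrightarrow> y \<le> x"
    using assms(9) unfolding max_totally_uniform_flow_def by blast+
  have f1: "\<forall>j<k1. f1 j = x" and f2: "\<forall>j<k2. f2 j = x" and x0: "x \<ge> 0"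
    using mt k1 unfolding totally_uniform_flow_def splittable_flow_def by auto
  have cf: "concurrent_value d1 d2 k1 k2 f1 f2 = min (real k1 * x / d1) (real k2 * x / d2)"
    using f1 f2 by (simp add: concurrent_value_def)
  define v where "v = concurrent_value d1 d2 k1 k2 g1 g2"
  define S1 where "S1 = (\<Sum>j<k1. g1 j)"
  define S2 where "S2 = (\<Sum>j<k2. g2 j)"
  have v: "v = min (S1 / d1) (S2 / d2)" by (simp add: v_def S1_def S2_def concurrent_value_def)
  show "concurrent_value d1 d2 k1 k2 f1 f2 \<ge> concurrent_value d1 d2 k1 k2 g1 g2 / 2"
  proof (cases "v \<le> 0")
    case True
    have "min (real k1 * x / d1) (real k2 * x / d2) \<ge> 0" using x0 d by simp
    then show ?thesis using True cf v_def by linarith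
  next
    case False
    define y where "y = v * d1 / (2 * real k1)"
    have y2: "y = v * d2 / (2 * real k2)" using eqr d k1 k2 by (simp add: y_def field_simps)
    have ypos: "y > 0" using False d k1 by (simp add: y_def)
    have "v \<le> S1 / d1" using v by simp
    then have "v * d1 \<le> S1" using d by (simp add: pos_le_divide_eq)
    moreover have "2 * real k1 * y = v * d1" using k1 by (simp add: y_def)
    ultimately have S1: "S1 \<ge> 2 * real k1 * y" by simp
    have "v \<le> S2 / d2" using v by simp
    then have "v * d2 \<le> S2" using d by (simp add: pos_le_divide_eq)
    moreover have "2 * real k2 * y = v * d2" using k2 by (simp add: y2)
    ultimately have S2: "S2 \<ge> 2 * real k2 * y" by simp
    have sfd: "\<forall>j<k1. is_path E s1 t1 (Q1 j) \<and> g1 j \<ge> 0" "\<forall>j<k2. is_path E s2 t2 (Q2 j) \<and> g2 j \<ge> 0"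
      "\<forall>e\<in>E. edge_load k1 k2 Q1 g1 Q2 g2 e \<le> real (u e)"
      using sf unfolding splittable_flow_def by auto
    obtain \<sigma>1 where \<sigma>1: "\<forall>i<k1. \<sigma>1 i < k1"
      "\<forall>e. (\<Sum>i<k1. if e \<in> path_edges (Q1 (\<sigma>1 i)) then y else 0)
          \<le> (\<Sum>j<k1. if e \<in> path_edges (Q1 j) then g1 j else 0)"
      using build_commodity[OF ypos _ S1[unfolded S1_def], of Q1] sfd(1) by blast
    obtain \<sigma>2 where \<sigma>2: "\<forall>i<k2. \<sigma>2 i < k2"
      "\<forall>e. (\<Sum>i<k2. if e \<in> path_edges (Q2 (\<sigma>2 i)) then y else 0)
          \<le> (\<Sum>j<k2. if e \<in> path_edges (Q2 j) then g2 j else 0)"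
      using build_commodity[OF ypos _ S2[unfolded S2_def], of Q2] sfd(2) by blast
    have "totally_uniform_flow E u s1 t1 s2 t2 k1 k2 (Q1 \<circ> \<sigma>1) (\<lambda>_. y) (Q2 \<circ> \<sigma>2) (\<lambda>_. y) y"
      unfolding totally_uniform_flow_def splittable_flow_def
    proof (intro conjI ballI allI impI)
      fix e assume "e \<in> E"
      have "edge_load k1 k2 (Q1 \<circ> \<sigma>1) (\<lambda>_. y) (Q2 \<circ> \<sigma>2) (\<lambda>_. y) e \<le> edge_load k1 k2 Q1 g1 Q2 g2 e"
        unfolding edge_load_def using \<sigma>1(2) \<sigma>2(2) by (simp add: add_mono)
      then show "edge_load k1 k2 (Q1 \<circ> \<sigma>1) (\<lambda>_. y) (Q2 \<circ> \<sigma>2) (\<lambda>_. y) e \<le> real (u e)"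
        using sfd(3) \<open>e \<in> E\<close> by fastforce
    qed (use ypos sfd \<sigma>1 \<sigma>2 in auto)
    then have "y \<le> x" by (rule mx)
    have "real k1 * x / d1 \<ge> v / 2"
    proof -
      have "real k1 * y / d1 = v / 2" using d(1) k1 by (simp add: y_def field_simps)
      moreover have "real k1 * y / d1 \<le> real k1 * x / d1"
        using \<open>y \<le> x\<close> d(1,2) by (simp add: divide_right_mono mult_left_mono)
      ultimately show ?thesis by linarith
    qed
    moreover have "real k2 * x / d2 \<ge> v / 2"
    proof -
      have "real k2 * y / d2 = v / 2" using d(2) k2 by (simp add: y2 field_simps)
      moreover have "real k2 * y / d2 \<le> real k2 * x / d2"
        using \<open>y \<le> x\<close> d(1,2) by (simp add: divide_right_mono mult_left_mono)
      ultimately show ?thesis by linarith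
    qed
    ultimately show ?thesis using cf v_def by simp
  qed
qed

end
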